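(* For $p,q>0$, $x\ge0$ and $0\le y<1$, with $z=\tfrac12xy$, the series below converge and $$B_{p,q}(x,y)=\frac{e^{-x/2}y^p(1-y)^q}{pB(p,q)}\sum_{j=0}^\infty y^j\frac{(p+q)_j}{(p+1)_j}M(p+q+j,p+1+j,z) =\frac{e^{x(y-1)/2}y^p(1-y)^q}{pB(p,q)}\sum_{j=0}^\infty y^j\frac{(p+q)_j}{(p+1)_j}M(1-q,p+1+j,-z).$$ Equivalently, $B_{p,q}(x,y)=\frac{e^{-x/2}y^p(1-y)^q}{pB(p,q)}\sum_{j=0}^\infty y^j\,\frac{d^j}{dz^j}M(p+q,p+1,z)$.
   Context: For $p,q>0$ and $0\le y\le 1$, $I_y(p,q)=\frac{1}{B(p,q)}\int_0^y t^{p-1}(1-t)^{q-1}\,dt$ is the regularized incomplete beta function, with $B(p,q)=\Gamma(p)\Gamma(q)/\Gamma(p+q)$. The cumulative noncentral beta distribution is $B_{p,q}(x,y)=e^{-x/2}\sum_{j=0}^\infty \frac{1}{j!}\left(\frac x2\right)^j I_y(p+j,q)$ for $x\ge0$. $M(a,b,z)=\sum_{n\ge0}\frac{(a)_n}{(b)_n}\frac{z^n}{n!}$ is Kummer's confluent hypergeometric function, and $(a)_n$ is the Pochhammer symbol. *)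

theory Defs
  imports "HOL-Analysis.Analysis"
begin

definition inc_beta :: "real \<Rightarrow> real \<Rightarrow> real \<Rightarrow> real" where
  "inc_beta y p q = integral {0..y} (\<lambda>t. t powr (p - 1) * (1 - t) powr (q - 1)) / Beta p q"

definition noncentral_beta :: "real \<Rightarrow> real \<Rightarrow> real \<Rightarrow> real \<Rightarrow> real" where
  "noncentral_beta p q x y =
     exp (- x / 2) * (\<Sum>j. (x / 2) ^ j / fact j * inc_beta y (p + real j) q)"

definition kummerM :: "real \<Rightarrow> real \<Rightarrow> real \<Rightarrow> real" where
  "kummerM a b z = (\<Sum>n. pochhammer a n / pochhammer b n * z ^ n / fact n)"

end

theory Submission
  imports Defs "HOL-Computational_Algebra.Formal_Power_Series"
begin


definition kc :: "real \<Rightarrow> real \<Rightarrow> nat \<Rightarrow> real" where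
  "kc a b n = pochhammer a n / pochhammer b n / fact n"

lemma kummerM_ps: "kummerM a b z = (\<Sum>n. kc a b n * z ^ n)"
  unfolding kummerM_def kc_def by (simp add: field_simps)

lemma kummer_abs_summable:
  assumes b: "b > 0"
  shows "summable (\<lambda>n. norm (kc a b n * z ^ n))"
proof -
  define N where "N = nat \<lceil>2 * (\<bar>a\<bar> + \<bar>z\<bar>)\<rceil>"
  show ?thesis
  proof (rule summable_ratio_test[where c="1/2" and N=N])
    fix n assume n: "n \<ge> N"
    have nN: "real n \<ge> 2 * (\<bar>a\<bar> + \<bar>z\<bar>)" using n unfolding N_def by linarith
    have pb: "pochhammer b n > 0" using b by (intro pochhammer_pos) auto
    have rec: "kc a b (Suc n) * z ^ Suc n = (kc a b n * z ^ n) * ((a + n) * z / ((b + n) * (n+1)))"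
      using pb b unfolding kc_def by (simp add: pochhammer_Suc field_simps)
    have "\<bar>a + n\<bar> * \<bar>z\<bar> \<le> (\<bar>a\<bar> + n) * \<bar>z\<bar>" by (intro mult_right_mono) auto
    also have "\<dots> = \<bar>a\<bar> * \<bar>z\<bar> + n * \<bar>z\<bar>" by (simp add: algebra_simps)
    also have "\<dots> \<le> \<bar>a\<bar> * n + n * \<bar>z\<bar>" using nN by (intro add_mono mult_left_mono) auto
    also have "\<dots> = n * (\<bar>a\<bar> + \<bar>z\<bar>)" by (simp add: algebra_simps)
    also have "\<dots> \<le> n * (n / 2)" using nN by (intro mult_left_mono) auto
    also have "\<dots> \<le> (b + n) * (n + 1) / 2" using b
      by (simp add: algebra_simps mult_mono)
    finally have ineq: "\<bar>a + n\<bar> * \<bar>z\<bar> \<le> (b + n) * (n + 1) / 2" .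
    have pos: "(b + n) * (n + 1) > 0" using b by simp
    have "norm ((a + n) * z / ((b + n) * (n+1))) \<le> 1/2"
    proof -
      have "norm ((a + n) * z / ((b + n) * (n+1))) = \<bar>a+n\<bar>*\<bar>z\<bar>/((b+n)*(n+1))"
        using pos b by (simp add: abs_mult)
      also have "\<dots> \<le> 1/2" using ineq pos by (simp add: divide_le_eq)
      finally show ?thesis .
    qed
    then show "norm (norm (kc a b (Suc n) * z ^ Suc n)) \<le> 1/2 * norm (norm (kc a b n * z ^ n))"
    proof -
      have "norm (norm (kc a b (Suc n) * z ^ Suc n)) = norm (kc a b n * z ^ n) * norm ((a + n) * z / ((b + n) * (n+1)))"
        unfolding rec real_norm_def abs_abs by (rule abs_mult)
      also have "\<dots> \<le> norm (kc a b n * z ^ n) * (1/2)"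
        by (rule mult_left_mono[OF \<open>norm ((a + n) * z / ((b + n) * (n+1))) \<le> 1/2\<close>]) simp
      finally show ?thesis by simp
    qed
  qed simp
qed

lemma kummer_summable: "b > 0 \<Longrightarrow> summable (\<lambda>n. kc a b n * z ^ n)"
  by (rule summable_norm_cancel[OF kummer_abs_summable])

lemma diffs_kc: assumes "b > 0" shows "diffs (kc a b) = (\<lambda>n. a / b * kc (a+1) (b+1) n)"
proof
  fix n
  have "pochhammer (b+1) n > 0" using assms by (intro pochhammer_pos) auto
  then show "diffs (kc a b) n = a / b * kc (a+1) (b+1) n"
    using assms unfolding diffs_def kc_def
    by (simp add: pochhammer_rec field_simps del: of_nat_Suc)
qed

lemma kummer_deriv:
  assumes "b > 0"
  shows "((\<lambda>w. kummerM a b w) has_field_derivative (a / b * kummerM (a+1) (b+1) w)) (at w)"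
proof -
  have "((\<lambda>x. \<Sum>n. kc a b n * x^n) has_field_derivative (\<Sum>n. diffs (kc a b) n * w^n)) (at w)"
    by (rule termdiffs_strong_converges_everywhere, rule kummer_summable[OF assms])
  also have "(\<Sum>n. diffs (kc a b) n * w^n) = a / b * kummerM (a+1) (b+1) w"
    unfolding diffs_kc[OF assms] kummerM_ps
    using suminf_mult[OF kummer_summable[of "b+1" "a+1" w], of "a/b"] assms
    by (simp add: mult.assoc)
  finally show ?thesis unfolding kummerM_ps .
qed

lemma kummer_derivs:
  assumes "b > 0"
  shows "(deriv ^^ j) (\<lambda>w. kummerM a b w) =
     (\<lambda>w. pochhammer a j / pochhammer b j * kummerM (a + real j) (b + real j) w)"
proof (induction j)
  case 0 then show ?case by simp
next
  case (Suc j)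
  have bj: "b + real j > 0" using assms by simp
  have pb: "pochhammer b j > 0" using assms by (intro pochhammer_pos) auto
  show ?case
  proof
    fix w
    have "((\<lambda>w. pochhammer a j / pochhammer b j * kummerM (a + real j) (b + real j) w)
        has_field_derivative (pochhammer a j / pochhammer b j * ((a + real j) / (b + real j)
          * kummerM (a + real j + 1) (b + real j + 1) w))) (at w)"
      by (intro DERIV_cmult kummer_deriv bj)
    then have "deriv (\<lambda>w. pochhammer a j / pochhammer b j * kummerM (a + real j) (b + real j) w) w
       = pochhammer a j / pochhammer b j * ((a + real j) / (b + real j)
          * kummerM (a + real j + 1) (b + real j + 1) w)"
      by (rule DERIV_imp_deriv)
    then show "(deriv ^^ Suc j) (\<lambda>w. kummerM a b w) w =
       pochhammer a (Suc j) / pochhammer b (Suc j) * kummerM (a + real (Suc j)) (b + real (Suc j)) w"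
      using Suc.IH bj pb by (simp add: pochhammer_Suc field_simps)
  qed
qed

lemma neg_nat_poch: assumes "k \<le> n"
  shows "pochhammer (- real n) k = (-1)^k * fact n / fact (n - k)"
proof -
  have "fact n = (fact (n-k) :: real) * pochhammer (1 + real (n-k)) (n - (n-k))"
    using pochhammer_product[of "n-k" n "1::real"] by (simp add: pochhammer_fact)
  then have "pochhammer (real n - real k + 1) k = fact n / (fact (n-k) :: real)"
    using assms by (simp add: of_nat_diff field_simps add.commute)
  then show ?thesis using pochhammer_minus[of "real n" k] by simp
qed

lemma field_aux: fixes xp xq xf xg xh xs xu xv :: real
  assumes "xq \<noteq> 0" "xf \<noteq> 0" "xg \<noteq> 0" "xh \<noteq> 0"
  shows "xp/xq/xg*(xs*xu)*(xv/xh) = (xu*xv)/xf*(xp*(xs*xf/xh)/(xg*xq))"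
  using assms by (simp add: field_simps)

lemma kummer_transform:
  assumes b: "b > 0"
  shows "kummerM a b z = exp z * kummerM (b - a) b (- z)"
proof -
  have e: "exp z = (\<Sum>n. z^n / fact n)"
    using exp_converges[of z] by (simp add: sums_iff divide_inverse mult.commute)
  have en: "summable (\<lambda>n. norm (z^n / fact n))"
    using summable_norm_exp[of z] by (simp add: divide_inverse mult.commute)
  have "kummerM (b - a) b (- z) * exp z =
      (\<Sum>n. \<Sum>i\<le>n. kc (b-a) b i * (-z)^i * (z^(n-i) / fact (n-i)))"
    unfolding e kummerM_ps by (rule Cauchy_product[OF kummer_abs_summable[OF b] en])
  also have "\<dots> = (\<Sum>n. kc a b n * z^n)"
  proof (rule suminf_cong)
    fix n
    have V: "(\<Sum>k=0..n. pochhammer (b-a) k * pochhammer (- real n) k / (fact k * pochhammer b k))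
        = pochhammer (b - (b-a)) n / pochhammer b n"
    proof -
      have "\<forall>i\<in>{0..<n}. b \<noteq> - of_nat i" using b by (intro ballI) (smt (verit) of_nat_0_le_iff)
      from Vandermonde_pochhammer[OF this, of "b-a"] show ?thesis by (simp only: of_nat_fact)
    qed
    have "(\<Sum>i\<le>n. kc (b-a) b i * (-z)^i * (z^(n-i) / fact (n-i)))
        = (\<Sum>i\<le>n. z^n / fact n * (pochhammer (b-a) i * pochhammer (- real n) i / (fact i * pochhammer b i)))"
    proof (rule sum.cong)
      fix i assume "i \<in> {..n}"
      then have i: "i \<le> n" by simp
      have "z^i * z^(n-i) = z^(i + (n-i))" by (rule power_add[symmetric])
      then have zn: "z^n = z^i * z^(n-i)" using i by simp
      have mz: "(-z)^i = (-1)^i * z^i" by (rule power_minus)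
      have pbi: "pochhammer b i \<noteq> 0" using b pochhammer_pos[of b i] by simp
      have f1: "fact n \<noteq> (0::real)" "fact i \<noteq> (0::real)" "fact (n-i) \<noteq> (0::real)" by simp_all
      show "kc (b-a) b i * (-z)^i * (z^(n-i) / fact (n-i)) =
          z^n / fact n * (pochhammer (b-a) i * pochhammer (- real n) i / (fact i * pochhammer b i))"
        unfolding neg_nat_poch[OF i] kc_def mz zn by (rule field_aux[OF pbi f1])
    qed simp
    also have "\<dots> = z^n / fact n * (pochhammer a n / pochhammer b n)"
      by (subst sum_distrib_left[symmetric]) (simp only: V[unfolded atLeast0AtMost] diff_diff_eq2 add_diff_cancel_left')
    finally show "(\<Sum>i\<le>n. kc (b-a) b i * (-z)^i * (z^(n-i) / fact (n-i))) = kc a b n * z^n"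
      unfolding kc_def by (simp add: field_simps)
  qed
  finally show ?thesis unfolding kummerM_ps by (simp add: mult.commute)
qed


definition hc :: "real \<Rightarrow> real \<Rightarrow> nat \<Rightarrow> real" where
  "hc a q k = pochhammer (a+q) k / pochhammer (a+1) k"

definition hS :: "real \<Rightarrow> real \<Rightarrow> real \<Rightarrow> real" where
  "hS a q t = (\<Sum>k. hc a q k * t ^ k)"

lemma field_aux2: fixes xx yy pp dd :: real shows "dd \<noteq> 0 \<Longrightarrow> xx*yy/(pp*dd)*dd = xx/pp*yy"
  by (simp add: field_simps)

lemma hc_Suc: assumes "a > 0" shows "hc a q (Suc n) * (a + 1 + n) = hc a q n * (a + q + n)"
proof -
  have "pochhammer (a+1) n > 0" using assms by (intro pochhammer_pos) auto
  moreover have "a + 1 + real n > 0" using assms by simp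
  ultimately show ?thesis unfolding hc_def pochhammer_Suc
    by (intro field_aux2) simp
qed

lemma hc_summable:
  assumes a: "a > 0" and q: "q > 0" and t: "\<bar>t\<bar> < 1"
  shows "summable (\<lambda>k. hc a q k * t ^ k)"
proof -
  define N where "N = nat \<lceil>2 * (a + q) / (1 - \<bar>t\<bar>)\<rceil>"
  define c where "c = (1 + \<bar>t\<bar>) / 2"
  show ?thesis
  proof (rule summable_ratio_test[where c=c and N=N])
    show "c < 1" using t unfolding c_def by simp
    fix n assume n: "n \<ge> N"
    have "real n \<ge> 2 * (a + q) / (1 - \<bar>t\<bar>)" using n unfolding N_def by linarith
    then have nN: "real n * (1 - \<bar>t\<bar>) / 2 \<ge> a + q" using t by (simp add: field_simps)
    have pos: "a + 1 + real n > 0" using a by simp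
    have "\<bar>t\<bar> * (a + q + n) \<le> (a + q) + \<bar>t\<bar> * n" using t a q
      by (smt (verit) mult_left_le_one_le abs_ge_zero distrib_left)
    also have "\<dots> \<le> c * (a + 1 + n)"
    proof -
      obtain s where s: "s = \<bar>t\<bar>" by blast
      have s0: "0 \<le> s" "s < 1" using s t by auto
      have h0: "0 \<le> s * a" using a s0 by simp
      have h1: "c * (a + 1 + n) = (a+1+n)/2 + s*a/2 + s/2 + s*n/2"
        unfolding c_def s by (simp add: field_simps)
      have h2: "n/2 - s*n/2 \<ge> a+q" using nN unfolding s by (simp add: field_simps)
      have "a + q + s * n \<le> (a+1+n)/2 + s*a/2 + s/2 + s*n/2" using h0 h2 a s0 by argo
      then show ?thesis unfolding h1 s .
    qed
    finally have ineq: "\<bar>t\<bar> * (a + q + n) \<le> c * (a + 1 + n)" .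
    have rec: "hc a q (Suc n) * t ^ Suc n = (hc a q n * t ^ n) * (t * (a + q + n) / (a + 1 + n))"
    proof -
      have e: "hc a q (Suc n) = hc a q n * (a+q+n)/(a+1+n)"
        using hc_Suc[OF a, of q n] pos by (simp add: field_simps)
      show ?thesis unfolding e using pos by (simp add: field_simps)
    qed
    have r: "norm (t * (a + q + n) / (a + 1 + n)) \<le> c"
    proof -
      have "norm (t * (a + q + n) / (a + 1 + n)) = \<bar>t\<bar> * (a + q + n) / (a + 1 + n)"
        using pos a q by (simp add: abs_mult)
      also have "\<dots> \<le> c" using ineq pos by (simp add: divide_le_eq)
      finally show ?thesis .
    qed
    have "norm (hc a q (Suc n) * t ^ Suc n) = norm (hc a q n * t ^ n) * norm (t * (a + q + n) / (a + 1 + n))"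
      unfolding rec by (rule norm_mult)
    also have "\<dots> \<le> norm (hc a q n * t ^ n) * c" by (rule mult_left_mono[OF r]) simp
    finally show "norm (hc a q (Suc n) * t ^ Suc n) \<le> c * norm (hc a q n * t ^ n)" by (simp add: mult.commute)
  qed
qed

lemma hS_deriv:
  assumes a: "a > 0" and q: "q > 0" and t: "\<bar>t\<bar> < 1"
  shows "((\<lambda>t. hS a q t) has_field_derivative (\<Sum>n. diffs (hc a q) n * t^n)) (at t)"
  unfolding hS_def
proof (rule termdiffs_strong)
  show "summable (\<lambda>n. hc a q n * ((1 + \<bar>t\<bar>)/2) ^ n)"
    using t by (intro hc_summable a q) auto
  show "norm t < norm ((1 + \<bar>t\<bar>)/2)" using t by auto
qed

lemma hS_diffs_sums:
  assumes a: "a > 0" and q: "q > 0" and t: "\<bar>t\<bar> < 1"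
  shows "(\<lambda>n. diffs (hc a q) n * t^n) sums (\<Sum>n. diffs (hc a q) n * t^n)"
proof -
  have "summable (\<lambda>n. diffs (hc a q) n * t^n)"
    by (rule termdiff_converges[where K=1]) (use t hc_summable[OF a q] in auto)
  then show ?thesis by (simp add: summable_sums)
qed

lemma hS_ode:
  assumes a: "a > 0" and q: "q > 0" and t: "\<bar>t\<bar> < 1"
  shows "a * hS a q t - (a+q) * t * hS a q t + t * (1-t) * (\<Sum>n. diffs (hc a q) n * t^n) = a"
proof -
  define S where "S = hS a q t"
  define S' where "S' = (\<Sum>n. diffs (hc a q) n * t^n)"
  define g where "g n = real n * hc a q n * t^n" for n
  have s1: "(\<lambda>n. hc a q n * t^n) sums S"
    unfolding S_def hS_def using hc_summable[OF a q t] by (simp add: summable_sums)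
  have s2: "(\<lambda>n. diffs (hc a q) n * t^n) sums S'"
    unfolding S'_def by (rule hS_diffs_sums[OF a q t])
  have "(\<lambda>n. g (Suc n)) sums (t * S')"
  proof -
    have "(\<lambda>n. t * (diffs (hc a q) n * t^n)) sums (t * S')" by (rule sums_mult[OF s2])
    moreover have "(\<lambda>n. t * (diffs (hc a q) n * t^n)) = (\<lambda>n. g (Suc n))"
      unfolding g_def diffs_def by (auto simp: algebra_simps)
    ultimately show ?thesis by simp
  qed
  then have sg: "g sums (t * S')" unfolding sums_Suc_iff by (simp add: g_def)
  define A where "A n = a * (hc a q n * t^n) + g n" for n
  have sA: "A sums (a * S + t * S')" unfolding A_def
    by (intro sums_add sums_mult s1 sg)
  have sB: "(\<lambda>n. (a+q) * t * (hc a q n * t^n) + t * g n) sums ((a+q) * t * S + t * (t * S'))"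
    by (intro sums_add sums_mult s1 sg)
  have "(\<lambda>n. (a+q) * t * (hc a q n * t^n) + t * g n) = (\<lambda>n. A (Suc n))"
  proof
    fix n
    have "A (Suc n) = hc a q (Suc n) * (a + 1 + n) * t^(Suc n)"
      unfolding A_def g_def by (simp add: algebra_simps)
    also have "\<dots> = hc a q n * (a + q + n) * t^(Suc n)" by (simp only: hc_Suc[OF a])
    finally show "(a+q) * t * (hc a q n * t^n) + t * g n = A (Suc n)"
      unfolding g_def by (simp add: algebra_simps)
  qed
  with sB have "(\<lambda>n. A (Suc n)) sums ((a+q) * t * S + t * (t * S'))" by simp
  then have "A sums ((a+q) * t * S + t * (t * S') + A 0)" by (simp add: sums_Suc_iff)
  moreover have "A 0 = a" unfolding A_def g_def hc_def by simp
  ultimately have "a * S + t * S' = (a+q) * t * S + t * (t * S') + a"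
    using sA sums_unique2 by metis
  then show ?thesis unfolding S_def[symmetric] S'_def[symmetric] by (simp add: algebra_simps)
qed

lemma field_aux3: fixes xa xu xv xt xS xS' :: real
  assumes "xa \<noteq> 0" "xa * xS - (xa + xq) * xt * xS + xt * (1 - xt) * xS' = xa"
  shows "((xa * xu * ((1 - xt) * xv) + - (xq * xv) * (xt * xu)) * xS + xS' * ((xt * xu) * ((1 - xt) * xv))) / xa
     = xu * xv"
proof -
  have "(xa * xu * ((1 - xt) * xv) + - (xq * xv) * (xt * xu)) * xS + xS' * ((xt * xu) * ((1 - xt) * xv))
      = xu * xv * (xa * xS - (xa + xq) * xt * xS + xt * (1 - xt) * xS')"
    by (simp add: algebra_simps)
  also have "\<dots> = xu * xv * xa" using assms(2) by simp
  finally show ?thesis using assms(1) by simp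
qed

lemma inc_beta_has_integral:
  assumes a: "a > 0" and q: "q > 0" and y0: "0 \<le> y" and y1: "y < 1"
  shows "((\<lambda>t. t powr (a-1) * (1-t) powr (q-1)) has_integral
           (y powr a * (1-y) powr q * hS a q y / a)) {0..y}"
proof -
  define F where "F t = t powr a * (1-t) powr q * hS a q t / a" for t
  have "((\<lambda>t. t powr (a-1) * (1-t) powr (q-1)) has_integral (F y - F 0)) {0..y}"
  proof (rule fundamental_theorem_of_calculus_interior[OF y0])
    have cS: "continuous_on {0..y} (\<lambda>t. hS a q t)"
    proof (rule continuous_at_imp_continuous_on, intro ballI)
      fix t assume "t \<in> {0..y}"
      then have "\<bar>t\<bar> < 1" using y1 by auto
      from DERIV_isCont[OF hS_deriv[OF a q this]] show "isCont (\<lambda>t. hS a q t) t" .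
    qed
    have c1: "continuous_on {0..y} (\<lambda>t. t powr a)"
      by (rule continuous_on_powr') (use assms(1) in \<open>auto intro: continuous_intros\<close>)
    have c2: "continuous_on {0..y} (\<lambda>t. (1-t) powr q)"
      by (rule continuous_on_powr') (use y1 in \<open>auto intro: continuous_intros\<close>)
    show "continuous_on {0..y} F" unfolding F_def
      using a by (intro continuous_on_divide continuous_on_mult c1 c2 cS continuous_on_const) auto
  next
    fix t assume "t \<in> {0<..<y}"
    then have t0: "t > 0" and t1: "t < 1" and ta: "\<bar>t\<bar> < 1" using y1 by auto
    have D1: "((\<lambda>t. t powr a) has_real_derivative a * t powr (a-1)) (at t)"
      by (rule has_real_derivative_powr[OF t0])
    have D2: "((\<lambda>t. (1-t) powr q) has_real_derivative q * (1-t) powr (q - of_nat 1) * (-1)) (at t)"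
      by (rule DERIV_fun_powr) (use t1 in \<open>auto intro!: derivative_eq_intros\<close>)
    note D3 = hS_deriv[OF a q ta]
    have "(F has_real_derivative
       ((a * t powr (a-1) * (1-t) powr q + q * (1-t) powr (q - of_nat 1) * (-1) * t powr a) * hS a q t
         + (\<Sum>n. diffs (hc a q) n * t^n) * (t powr a * (1-t) powr q)) / a) (at t)"
      unfolding F_def by (intro DERIV_cdivide DERIV_mult D1 D2 D3)
    moreover have "((a * t powr (a-1) * (1-t) powr q + q * (1-t) powr (q - of_nat 1) * (-1) * t powr a) * hS a q t
         + (\<Sum>n. diffs (hc a q) n * t^n) * (t powr a * (1-t) powr q)) / a
         = t powr (a-1) * (1-t) powr (q-1)"
    proof -
      have e1: "t powr a = t * t powr (a-1)"
        using t0 by (simp add: powr_add[symmetric] powr_mult_base)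
      have e2: "(1-t) powr q = (1-t) * (1-t) powr (q-1)"
        using t1 by (simp add: powr_mult_base)
      show ?thesis unfolding e1 e2 of_nat_1
        using field_aux3[OF _ hS_ode[OF a q ta], of "t powr (a-1)" "(1-t) powr (q-1)"] a
        by (simp add: algebra_simps)
    qed
    ultimately show "(F has_vector_derivative t powr (a-1) * (1-t) powr (q-1)) (at t)"
      by (simp add: has_real_derivative_iff_has_vector_derivative)
  qed
  moreover have "F 0 = 0" unfolding F_def using a by simp
  ultimately show ?thesis unfolding F_def by simp
qed



lemma nonneg_double_swap:
  fixes u :: "nat \<Rightarrow> nat \<Rightarrow> real"
  assumes nn: "\<And>j k. u j k \<ge> 0" and rows: "\<And>j. summable (u j)"
    and tot: "summable (\<lambda>j. \<Sum>k. u j k)"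
  shows "summable (\<lambda>k. \<Sum>j. u j k) \<and> (\<Sum>j. \<Sum>k. u j k) = (\<Sum>k. \<Sum>j. u j k)"
proof -
  have hr: "((\<lambda>k. u j k) has_sum (\<Sum>k. u j k)) UNIV" for j
    by (rule sums_nonneg_imp_has_sum) (use rows[of j] nn in \<open>auto simp: summable_sums\<close>)
  have gnn: "(\<Sum>k. u j k) \<ge> 0" for j by (rule suminf_nonneg[OF rows]) (use nn in auto)
  have g: "(\<lambda>j. \<Sum>k. u j k) summable_on UNIV"
    by (rule summable_nonneg_imp_summable_on[OF tot gnn])
  have S: "(\<lambda>(j,k). u j k) summable_on Sigma UNIV (\<lambda>_. UNIV)"
    by (rule summable_on_SigmaI[OF _ g]) (use hr nn in auto)
  have S': "(\<lambda>(k,j). u j k) summable_on Sigma UNIV (\<lambda>_. UNIV)"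
    using S summable_on_swap[of "\<lambda>(j,k). u j k" UNIV UNIV] by (simp add: case_prod_unfold)
  have col: "(\<lambda>j. u j k) summable_on UNIV" for k
    using summable_on_SigmaD1[of "\<lambda>k j. u j k" UNIV "\<lambda>_. UNIV" k] S' by simp
  have colS: "summable (\<lambda>j. u j k)" for k by (rule summable_on_imp_summable[OF col])
  have hc: "((\<lambda>j. u j k) has_sum (\<Sum>j. u j k)) UNIV" for k
    by (rule sums_nonneg_imp_has_sum) (use colS[of k] nn in \<open>auto simp: summable_sums\<close>)
  obtain T where T: "((\<lambda>(k,j). u j k) has_sum T) (Sigma UNIV (\<lambda>_. UNIV))"
    using S' by (auto simp: summable_on_def)
  have "((\<lambda>k. \<Sum>j. u j k) has_sum T) UNIV"
    by (rule has_sum_Sigma'[OF T]) (use hc in auto)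
  then have cs: "(\<lambda>k. \<Sum>j. u j k) sums T" by (rule has_sum_imp_sums)
  obtain T2 where T2: "((\<lambda>(j,k). u j k) has_sum T2) (Sigma UNIV (\<lambda>_. UNIV))"
    using S by (auto simp: summable_on_def)
  have "((\<lambda>j. \<Sum>k. u j k) has_sum T2) UNIV"
    by (rule has_sum_Sigma'[OF T2]) (use hr in auto)
  then have rs: "(\<lambda>j. \<Sum>k. u j k) sums T2" by (rule has_sum_imp_sums)
  have "T = T2"
  proof -
    have "((\<lambda>(j,k). u j k) has_sum T) (UNIV \<times> UNIV)"
      using T has_sum_swap[of "\<lambda>(j,k). u j k" UNIV UNIV T] by (simp add: case_prod_unfold)
    with T2 show ?thesis using has_sum_unique by fastforce
  qed
  with cs rs show ?thesis by (simp add: sums_iff)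
qed

lemma Gamma_poch: assumes "x > 0" shows "Gamma (x + real j) = pochhammer x j * Gamma x"
proof (induction j)
  case 0 then show ?case by simp
next
  case (Suc j)
  have "x + real j \<notin> \<int>\<^sub>\<le>\<^sub>0" using assms nonpos_Ints_nonpos[of "x + real j"] by auto
  then have "Gamma (x + real j + 1) = (x + real j) * Gamma (x + real j)" by (rule Gamma_plus1)
  then show ?case using Suc.IH by (simp add: pochhammer_Suc add.assoc algebra_simps)
qed

lemma Beta_rel:
  assumes p: "p > 0" and q: "q > 0"
  shows "(p + real j) * Beta (p + real j) q * hc p q j = p * Beta p q"
proof -
  have g1: "Gamma (p + real j + q) = pochhammer (p + q) j * Gamma (p + q)"
    using Gamma_poch[of "p+q" j] p q by (simp add: add_ac)
  have g2: "(p + real j) * Gamma (p + real j) = pochhammer (p + 1) j * (p * Gamma p)"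
  proof -
    have "p + real j \<notin> \<int>\<^sub>\<le>\<^sub>0" using p nonpos_Ints_nonpos[of "p + real j"] by auto
    then have "(p + real j) * Gamma (p + real j) = Gamma (p + 1 + real j)"
      using Gamma_plus1[of "p + real j"] by (simp add: add_ac)
    also have "\<dots> = pochhammer (p + 1) j * Gamma (p + 1)" using Gamma_poch[of "p+1" j] p by simp
    also have "Gamma (p + 1) = p * Gamma p" using p nonpos_Ints_nonpos[of p] by (auto intro: Gamma_plus1)
    finally show ?thesis .
  qed
  have pos: "Gamma (p+q) > 0" "Gamma p > 0" "Gamma q > 0" "pochhammer (p+q) j > 0" "pochhammer (p+1) j > 0"
    using p q by (auto intro!: pochhammer_pos)
  have "(p + real j) * Beta (p + real j) q * hc p q j
      = ((p + real j) * Gamma (p + real j)) * Gamma q / Gamma (p + real j + q) * hc p q j"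
    unfolding Beta_def by simp
  also have "\<dots> = pochhammer (p + 1) j * (p * Gamma p) * Gamma q / (pochhammer (p + q) j * Gamma (p + q))
        * (pochhammer (p+q) j / pochhammer (p+1) j)"
    unfolding g1 g2 hc_def ..
  also have "\<dots> = p * Beta p q" unfolding Beta_def using pos by (simp add: field_simps)
  finally show ?thesis .
qed

lemma inc_beta_eq:
  assumes a: "a > 0" and q: "q > 0" and y0: "0 \<le> y" and y1: "y < 1"
  shows "inc_beta y a q = y powr a * (1-y) powr q * hS a q y / (a * Beta a q)"
  unfolding inc_beta_def using integral_unique[OF inc_beta_has_integral[OF assms]] by simp

lemma Beta_pos: "a > 0 \<Longrightarrow> b > 0 \<Longrightarrow> Beta a b > (0::real)"
  unfolding Beta_def by simp

lemma inc_beta_bounds: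
  assumes a: "a > 0" and q: "q > 0" and y0: "0 \<le> y" and y1: "y < 1"
  shows "0 \<le> inc_beta y a q \<and> inc_beta y a q \<le> 1"
proof -
  let ?f = "\<lambda>t. t powr (a-1) * (1-t) powr (q-1)"
  let ?I = "y powr a * (1-y) powr q * hS a q y / a"
  note I = inc_beta_has_integral[OF assms]
  have nn: "\<forall>t\<in>{0..1}. 0 \<le> ?f t" by auto
  have "?I \<le> Beta a q"
    by (rule has_integral_subset_le[OF _ I has_integral_Beta_real[OF a q]]) (use y1 nn in auto)
  moreover have "0 \<le> ?I" by (rule has_integral_nonneg[OF I]) auto
  moreover have "inc_beta y a q = ?I / Beta a q"
    unfolding inc_beta_def using integral_unique[OF I] by simp
  ultimately show ?thesis using Beta_pos[OF a q]
    by (metis divide_le_eq_1_pos divide_nonneg_pos)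
qed

lemma hc_prod: "hc p q j * hc (p + real j) q k = hc p q (j + k)"
  unfolding hc_def pochhammer_product'[of "p+q" j k] pochhammer_product'[of "p+1" j k]
  by (simp add: add_ac)

lemma hc_kc: "hc p q k * kc (p + q + real k) (p + 1 + real k) j = hc p q (k + j) / fact j"
  unfolding hc_def kc_def pochhammer_product'[of "p+q" k j] pochhammer_product'[of "p+1" k j]
  by (simp add: add_ac)



lemma main_pos:
  fixes p q x y :: real
  assumes p: "p > 0" and q: "q > 0" and x: "x \<ge> 0" and y0: "0 < y" and y1: "y < 1"
  defines "z \<equiv> x * y / 2"
  shows "summable (\<lambda>j. y ^ j * pochhammer (p + q) j / pochhammer (p + 1) j
                          * kummerM (p + q + real j) (p + 1 + real j) z) \<and>
         noncentral_beta p q x y =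
           exp (- x / 2) * y powr p * (1 - y) powr q / (p * Beta p q) *
           (\<Sum>j. y ^ j * pochhammer (p + q) j / pochhammer (p + 1) j
                  * kummerM (p + q + real j) (p + 1 + real j) z)"
proof -
  define u where "u j k = z^j / fact j * hc p q (j + k) * y^k" for j k
  define A where "A = y powr p * (1-y) powr q / (p * Beta p q)"
  define T where "T j = (x/2)^j / fact j * inc_beta y (p + real j) q" for j
  have z0: "z \<ge> 0" unfolding z_def using x y0 by simp
  have Apos: "A > 0" unfolding A_def using p q y0 y1 Beta_pos[OF p q] by simp
  have hcpos: "hc p q n > 0" for n unfolding hc_def using p q by (auto intro!: divide_pos_pos pochhammer_pos)
  have unn: "u j k \<ge> 0" for j k unfolding u_def using z0 y0 hcpos[of "j+k"] by simp
  have row: "u j sums (z^j / fact j * hc p q j * hS (p + real j) q y)" for j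
  proof -
    have "(\<lambda>k. hc (p + real j) q k * y^k) sums hS (p + real j) q y"
      unfolding hS_def using hc_summable[of "p + real j" q y] p q y0 y1 by (simp add: summable_sums)
    from sums_mult[OF this, of "z^j / fact j * hc p q j"]
    show ?thesis unfolding u_def hc_prod[symmetric, of p q j] by (simp add: mult_ac)
  qed
  have rows: "summable (u j)" for j using row by (rule sums_summable)
  have Teq: "T j = A * (\<Sum>k. u j k)" for j
  proof -
    have pj: "p + real j > 0" using p by simp
    have br: "(p + real j) * Beta (p + real j) q = p * Beta p q / hc p q j"
      using Beta_rel[OF p q, of j] hcpos[of j] by (simp add: field_simps)
    have yp: "y powr (p + real j) = y powr p * y ^ j"
      using y0 by (simp add: powr_add powr_realpow)
    have "T j = (x/2)^j / fact j * (y powr p * y ^ j * (1-y) powr q * hS (p + real j) q y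
                 / (p * Beta p q / hc p q j))"
      unfolding T_def inc_beta_eq[OF pj q less_imp_le[OF y0] y1] yp br ..
    also have "\<dots> = A * (z^j / fact j * hc p q j * hS (p + real j) q y)"
      unfolding A_def z_def using hcpos[of j] Beta_pos[OF p q] p
      by (simp add: field_simps power_mult_distrib)
    also have "\<dots> = A * (\<Sum>k. u j k)" using row[of j] by (simp add: sums_iff)
    finally show ?thesis .
  qed
  have Tsum: "summable T"
  proof (rule summable_comparison_test[OF _ summable_exp[of "x/2"]])
    show "\<exists>N. \<forall>n\<ge>N. norm (T n) \<le> inverse (fact n) * (x/2)^n"
    proof (intro exI allI impI)
      fix n
      have b: "0 \<le> inc_beta y (p + real n) q \<and> inc_beta y (p + real n) q \<le> 1"
        using p q y0 y1 by (intro inc_beta_bounds) auto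
      have xn: "0 \<le> (x/2)^n / fact n" using x by simp
      have xn': "0 \<le> (x/2)^n / fact n * inc_beta y (p + real n) q" using b by (intro mult_nonneg_nonneg xn) auto
      have "norm (T n) = (x/2)^n / fact n * inc_beta y (p + real n) q"
        unfolding T_def real_norm_def by (rule abs_of_nonneg) (rule xn')
      also have "\<dots> \<le> (x/2)^n / fact n * 1" using b xn by (intro mult_left_mono) auto
      finally show "norm (T n) \<le> inverse (fact n) * (x/2)^n" by (simp add: field_simps)
    qed
  qed
  have tot: "summable (\<lambda>j. \<Sum>k. u j k)"
  proof -
    have "(\<lambda>j. \<Sum>k. u j k) = (\<lambda>j. T j / A)" using Teq Apos by (auto simp: fun_eq_iff)
    then show ?thesis using summable_divide[OF Tsum] by simp
  qed
  from nonneg_double_swap[OF unn rows tot]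
  have sw: "summable (\<lambda>k. \<Sum>j. u j k)" "(\<Sum>j. \<Sum>k. u j k) = (\<Sum>k. \<Sum>j. u j k)" by auto
  have coleq: "(\<Sum>j. u j k) = y ^ k * pochhammer (p + q) k / pochhammer (p + 1) k
                  * kummerM (p + q + real k) (p + 1 + real k) z" for k
  proof -
    have pb: "p + 1 + real k > 0" using p by simp
    have "(\<lambda>j. kc (p + q + real k) (p + 1 + real k) j * z^j) sums kummerM (p + q + real k) (p + 1 + real k) z"
      unfolding kummerM_ps using kummer_summable[OF pb] by (simp add: summable_sums)
    from sums_mult[OF this, of "y^k * hc p q k"]
    have "(\<lambda>j. y^k * hc p q k * (kc (p + q + real k) (p + 1 + real k) j * z^j)) sums
            (y^k * hc p q k * kummerM (p + q + real k) (p + 1 + real k) z)" .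
    moreover have "(\<lambda>j. y^k * hc p q k * (kc (p + q + real k) (p + 1 + real k) j * z^j)) = (\<lambda>j. u j k)"
    proof
      fix j
      have "y^k * hc p q k * (kc (p + q + real k) (p + 1 + real k) j * z^j)
          = y^k * (hc p q k * kc (p + q + real k) (p + 1 + real k) j) * z^j" by (simp add: mult_ac)
      also have "\<dots> = u j k" unfolding hc_kc u_def by (simp add: add.commute)
      finally show "y^k * hc p q k * (kc (p + q + real k) (p + 1 + real k) j * z^j) = u j k" .
    qed
    ultimately show ?thesis unfolding hc_def by (simp add: sums_iff)
  qed
  have nb: "noncentral_beta p q x y = exp (- x / 2) * (\<Sum>j. T j)"
    unfolding noncentral_beta_def T_def ..
  have "(\<Sum>j. T j) = A * (\<Sum>j. \<Sum>k. u j k)"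
    unfolding Teq using suminf_mult[OF tot, of A] by simp
  then show ?thesis using sw coleq unfolding nb A_def by (simp add: mult_ac)
qed

lemma inc_beta_0: "inc_beta 0 a q = 0"
  unfolding inc_beta_def by simp

theorem mainTheorem9:
  fixes p q x y :: real
  assumes "p > 0" and "q > 0" and "x \<ge> 0" and "0 \<le> y" and "y < 1"
  defines "z \<equiv> x * y / 2"
  shows "summable (\<lambda>j. y ^ j * pochhammer (p + q) j / pochhammer (p + 1) j
                          * kummerM (p + q + real j) (p + 1 + real j) z) \<and>
         summable (\<lambda>j. y ^ j * pochhammer (p + q) j / pochhammer (p + 1) j
                          * kummerM (1 - q) (p + 1 + real j) (- z)) \<and>
         summable (\<lambda>j. y ^ j * (deriv ^^ j) (\<lambda>w. kummerM (p + q) (p + 1) w) z) \<and>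
         noncentral_beta p q x y =
           exp (- x / 2) * y powr p * (1 - y) powr q / (p * Beta p q) *
           (\<Sum>j. y ^ j * pochhammer (p + q) j / pochhammer (p + 1) j
                  * kummerM (p + q + real j) (p + 1 + real j) z) \<and>
         noncentral_beta p q x y =
           exp (x * (y - 1) / 2) * y powr p * (1 - y) powr q / (p * Beta p q) *
           (\<Sum>j. y ^ j * pochhammer (p + q) j / pochhammer (p + 1) j
                  * kummerM (1 - q) (p + 1 + real j) (- z)) \<and>
         noncentral_beta p q x y =
           exp (- x / 2) * y powr p * (1 - y) powr q / (p * Beta p q) *
           (\<Sum>j. y ^ j * (deriv ^^ j) (\<lambda>w. kummerM (p + q) (p + 1) w) z)"
proof -
  note p = assms(1) and q = assms(2) and x = assms(3) and y0 = assms(4) and y1 = assms(5)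
  define t1 where "t1 j = y ^ j * pochhammer (p + q) j / pochhammer (p + 1) j
                          * kummerM (p + q + real j) (p + 1 + real j) z" for j
  define t2 where "t2 j = y ^ j * pochhammer (p + q) j / pochhammer (p + 1) j
                          * kummerM (1 - q) (p + 1 + real j) (- z)" for j
  define t3 where "t3 j = y ^ j * (deriv ^^ j) (\<lambda>w. kummerM (p + q) (p + 1) w) z" for j
  have t12: "t1 j = t2 j * exp z" for j
  proof -
    have pb: "p + 1 + real j > 0" using p by simp
    have d: "(p + 1 + real j) - (p + q + real j) = 1 - q" by simp
    have "kummerM (p + q + real j) (p + 1 + real j) z = exp z * kummerM (1 - q) (p + 1 + real j) (- z)"
      using kummer_transform[OF pb, of "p + q + real j" z] unfolding d .
    then show ?thesis unfolding t1_def t2_def by (simp add: mult_ac)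
  qed
  have t13: "t3 j = t1 j" for j
  proof -
    have pb: "p + 1 > 0" using p by simp
    show ?thesis unfolding t3_def t1_def kummer_derivs[OF pb] by (simp add: add_ac)
  qed
  have t21: "t2 j = t1 j * exp (- z)" for j unfolding t12 by (simp add: exp_minus)
  have ee: "exp (x * (y - 1) / 2) * exp (- z) = exp (- x / 2)"
    unfolding z_def exp_add[symmetric] by (simp add: field_simps)
  have main: "summable t1 \<and> noncentral_beta p q x y =
           exp (- x / 2) * y powr p * (1 - y) powr q / (p * Beta p q) * (\<Sum>j. t1 j)"
  proof (cases "y = 0")
    case True
    have "t1 = (\<lambda>j. (pochhammer (p + q) j / pochhammer (p + 1) j
                          * kummerM (p + q + real j) (p + 1 + real j) z) * 0 ^ j)"
      unfolding t1_def True by (auto simp: fun_eq_iff)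
    then have "summable t1" by (simp only: summable_0_powser)
    moreover have "noncentral_beta p q x y = 0"
      unfolding noncentral_beta_def True inc_beta_0 by simp
    ultimately show ?thesis using True by simp
  next
    case False
    then have "y > 0" using y0 by simp
    from main_pos[OF p q x this y1] show ?thesis unfolding t1_def z_def .
  qed
  then have s1: "summable t1" and e1: "noncentral_beta p q x y =
           exp (- x / 2) * y powr p * (1 - y) powr q / (p * Beta p q) * (\<Sum>j. t1 j)" by auto
  have s2: "summable t2" unfolding t21 by (rule summable_mult2[OF s1])
  have s3: "summable t3" unfolding t13 by (rule s1)
  have e2: "(\<Sum>j. t2 j) = (\<Sum>j. t1 j) * exp (- z)" unfolding t21 by (rule suminf_mult2[OF s1, symmetric])
  have e3: "(\<Sum>j. t3 j) = (\<Sum>j. t1 j)" unfolding t13 ..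
  have e5: "noncentral_beta p q x y =
           exp (x * (y - 1) / 2) * y powr p * (1 - y) powr q / (p * Beta p q) * (\<Sum>j. t2 j)"
    unfolding e1 e2 using ee by (simp add: mult_ac)
  show ?thesis
    using s1 s2 s3 e1 e5 e3
    unfolding t1_def[abs_def] t2_def[abs_def] t3_def[abs_def] by simp
qed


end
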